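(* Let $K$ be a field, $X$ a finite connected poset with $n$ elements, and $m$ a positive integer. Then $$J_m=\mathrm{span}_K\{e_{xy}: l(\lfloor x,y\rfloor)\ge m\}=J(I(X,K))^m.$$ In particular $J_n=J(I(X,K))^n=\{0\}$, and $J_m$ is an (associative) ideal, hence a Lie ideal, of $I(X,K)$.
   Context: $I(X,K)$ is the incidence algebra: functions $f:X\times X\to K$ with $f(x,y)=0$ unless $x\le y$, product $(fg)(x,y)=\sum_{x\le t\le y}f(x,t)g(t,y)$; for $x\le y$, $e_{xy}$ is the function equal to $1$ at $(x,y)$ and $0$ elsewhere. $J(I(X,K))=\{f: f(x,x)=0\ \forall x\}$ is its Jacobson radical. $[f,g]=fg-gf$. $J_1=\mathrm{span}_K\{[f,g]:f,g\in I(X,K)\}$ and $J_m=\mathrm{span}_K\{[f,g]: f\in J_1,\ g\in J_{m-1}\}$ for $m\ge2$. $\lfloor x,y\rfloor=\{z:x\le z\le y\}$ and $l(\lfloor x,y\rfloor)$ is the maximum length of a chain in it (length of a chain = cardinality minus one). Connected means any two elements are joined by a sequence in which consecutive elements are in a covering relation. *)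

theory Defs
  imports Main "HOL-Library.Function_Algebras"
begin

text \<open>Incidence algebra I(X,K) of a finite poset X (the type 'a) over a field K (the type 'k).
  Elements are functions f :: 'a => 'a => 'k vanishing off the order relation.\<close>

definition inc_alg :: "('a::order \<Rightarrow> 'a \<Rightarrow> 'k::field) set" where
  "inc_alg = {f. \<forall>x y. \<not> x \<le> y \<longrightarrow> f x y = 0}"

definition inc_mult :: "('a::order \<Rightarrow> 'a \<Rightarrow> 'k::field) \<Rightarrow> ('a \<Rightarrow> 'a \<Rightarrow> 'k) \<Rightarrow> 'a \<Rightarrow> 'a \<Rightarrow> 'k" where
  "inc_mult f g = (\<lambda>x y. \<Sum>t\<in>{t. x \<le> t \<and> t \<le> y}. f x t * g t y)"

definition inc_comm :: "('a::order \<Rightarrow> 'a \<Rightarrow> 'k::field) \<Rightarrow> ('a \<Rightarrow> 'a \<Rightarrow> 'k) \<Rightarrow> 'a \<Rightarrow> 'a \<Rightarrow> 'k" where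
  "inc_comm f g = inc_mult f g - inc_mult g f"

definition eunit :: "'a \<Rightarrow> 'a \<Rightarrow> 'a \<Rightarrow> 'a \<Rightarrow> 'k::field" where
  "eunit x y = (\<lambda>u v. if u = x \<and> v = y then 1 else 0)"

definition kspan :: "('a \<Rightarrow> 'a \<Rightarrow> 'k::field) set \<Rightarrow> ('a \<Rightarrow> 'a \<Rightarrow> 'k) set" where
  "kspan S = {f. \<exists>A c. finite A \<and> A \<subseteq> S \<and> f = (\<lambda>u v. \<Sum>s\<in>A. c s * s u v)}"

definition inc_rad :: "('a::order \<Rightarrow> 'a \<Rightarrow> 'k::field) set" where
  "inc_rad = {f \<in> inc_alg. \<forall>x. f x x = 0}"

text \<open>J_m (only meaningful for m \<ge> 1; J_0 is set to I(X,K) as a dummy).\<close>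
fun Jlie :: "nat \<Rightarrow> ('a::order \<Rightarrow> 'a \<Rightarrow> 'k::field) set" where
  "Jlie 0 = inc_alg"
| "Jlie (Suc 0) = kspan {inc_comm f g | f g. f \<in> inc_alg \<and> g \<in> inc_alg}"
| "Jlie (Suc (Suc m)) = kspan {inc_comm f g | f g. f \<in> Jlie (Suc 0) \<and> g \<in> Jlie (Suc m)}"

fun rad_prods :: "nat \<Rightarrow> ('a::order \<Rightarrow> 'a \<Rightarrow> 'k::field) set" where
  "rad_prods 0 = inc_alg"
| "rad_prods (Suc 0) = inc_rad"
| "rad_prods (Suc (Suc m)) = {inc_mult f g | f g. f \<in> inc_rad \<and> g \<in> rad_prods (Suc m)}"

definition rad_pow :: "nat \<Rightarrow> ('a::order \<Rightarrow> 'a \<Rightarrow> 'k::field) set" where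
  "rad_pow m = kspan (rad_prods m)"

definition interval_length :: "'a::{order,finite} \<Rightarrow> 'a \<Rightarrow> nat" where
  "interval_length x y = Max {card C - 1 | C. C \<subseteq> {z. x \<le> z \<and> z \<le> y} \<and> Complete_Partial_Order.chain (\<le>) C}"

definition covers :: "'a::order \<Rightarrow> 'a \<Rightarrow> bool" where
  "covers x y \<longleftrightarrow> x < y \<and> \<not> (\<exists>z. x < z \<and> z < y)"

definition poset_connected :: "'a::order itself \<Rightarrow> bool" where
  "poset_connected _ \<longleftrightarrow> (\<forall>x y::'a. (\<lambda>a b. covers a b \<or> covers b a)\<^sup>*\<^sup>* x y)"

end

theory Submission
  imports Defs
begin

definition Pm :: "nat \<Rightarrow> ('a::{order,finite} \<Rightarrow> 'a \<Rightarrow> 'k::field) set" where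
  "Pm m = {f. \<forall>x y. f x y \<noteq> 0 \<longrightarrow> x \<le> y \<and> m \<le> interval_length x y}"

lemma chain_iff: "Complete_Partial_Order.chain (\<le>) C \<longleftrightarrow> (\<forall>a\<in>C. \<forall>b\<in>C. a \<le> b \<or> b \<le> a)"
  by (auto simp: Complete_Partial_Order.chain_def)

lemma il_set_finite: "finite {card C - 1 | C. C \<subseteq> {z::'a::{order,finite}. x \<le> z \<and> z \<le> y} \<and> Complete_Partial_Order.chain (\<le>) C}"
  by (rule finite_image_set) simp

lemma il_ge:
  fixes x y :: "'a::{order,finite}"
  assumes "C \<subseteq> {z. x \<le> z \<and> z \<le> y}" "\<forall>a\<in>C. \<forall>b\<in>C. a \<le> b \<or> b \<le> a"
  shows "card C - 1 \<le> interval_length x y"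
  unfolding interval_length_def
  apply (rule Max_ge[OF il_set_finite])
  using assms by (auto simp: chain_iff)

lemma il_obtain:
  fixes x y :: "'a::{order,finite}"
  obtains C where "C \<subseteq> {z. x \<le> z \<and> z \<le> y}" "\<forall>a\<in>C. \<forall>b\<in>C. a \<le> b \<or> b \<le> a"
    "card C - 1 = interval_length x y"
proof -
  have ne: "{card C - 1 | C. C \<subseteq> {z::'a. x \<le> z \<and> z \<le> y} \<and> Complete_Partial_Order.chain (\<le>) C} \<noteq> {}"
    by (auto simp: chain_iff)
  have "interval_length x y \<in> {card C - 1 | C. C \<subseteq> {z::'a. x \<le> z \<and> z \<le> y} \<and> Complete_Partial_Order.chain (\<le>) C}"
    unfolding interval_length_def by (rule Max_in[OF il_set_finite ne])
  then show ?thesis using that by (auto simp: chain_iff)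
qed

lemma il_refl: "interval_length (x::'a::{order,finite}) x = 0"
proof -
  obtain C where C: "C \<subseteq> {z. x \<le> z \<and> z \<le> x}" "\<forall>a\<in>C. \<forall>b\<in>C. a \<le> b \<or> b \<le> a" "card C - 1 = interval_length x x"
    by (rule il_obtain)
  have "C \<subseteq> {x}" using C(1) by auto
  then have "card C \<le> card {x}" by (rule card_mono[rotated]) simp
  then have "card C \<le> 1" by simp
  then show ?thesis using C(3) by simp
qed

lemma il_pos:
  fixes x y :: "'a::{order,finite}"
  assumes "x < y" shows "1 \<le> interval_length x y"
proof -
  have "card {x, y} - 1 \<le> interval_length x y"
    by (rule il_ge) (use assms in auto)
  then show ?thesis using assms by auto
qed

lemma il_ge1: "x \<le> y \<Longrightarrow> 1 \<le> interval_length x y \<Longrightarrow> x < (y::'a::{order,finite})"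
  using il_refl[of x] by (cases "x = y") auto

lemma il_step:
  fixes x t y :: "'a::{order,finite}"
  assumes "x < t" "t \<le> y" shows "Suc (interval_length t y) \<le> interval_length x y"
proof -
  obtain C where C: "C \<subseteq> {z. t \<le> z \<and> z \<le> y}" "\<forall>a\<in>C. \<forall>b\<in>C. a \<le> b \<or> b \<le> a"
    "card C - 1 = interval_length t y" by (rule il_obtain)
  let ?C = "insert x (insert t C)"
  have "card ?C - 1 \<le> interval_length x y"
    apply (rule il_ge) using C assms by (auto intro: order_trans dest: less_imp_le)
  moreover have "x \<notin> insert t C" using C(1) assms by auto
  moreover have "card C \<le> card (insert t C)" by (rule card_mono) auto
  moreover have "card (insert t C) \<ge> 1" by (simp add: Suc_leI card_gt_0_iff)
  ultimately show ?thesis using C(3) by (simp add: card_insert_if)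
qed

lemma il_step':
  fixes x t y :: "'a::{order,finite}"
  assumes "x \<le> t" "t < y" shows "Suc (interval_length x t) \<le> interval_length x y"
proof -
  obtain C where C: "C \<subseteq> {z. x \<le> z \<and> z \<le> t}" "\<forall>a\<in>C. \<forall>b\<in>C. a \<le> b \<or> b \<le> a"
    "card C - 1 = interval_length x t" by (rule il_obtain)
  let ?C = "insert y (insert t C)"
  have "card ?C - 1 \<le> interval_length x y"
    apply (rule il_ge) using C assms by (auto intro: order_trans dest: less_imp_le)
  moreover have "y \<notin> insert t C" using C(1) assms by auto
  moreover have "card C \<le> card (insert t C)" by (rule card_mono) auto
  moreover have "card (insert t C) \<ge> 1" by (simp add: Suc_leI card_gt_0_iff)
  ultimately show ?thesis using C(3) by (simp add: card_insert_if)
qed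

lemma il_mono:
  fixes x t y :: "'a::{order,finite}"
  assumes "x \<le> t" "t \<le> y" shows "interval_length t y \<le> interval_length x y"
  using il_step[of x t y] assms by (cases "x = t") (auto simp: less_le)

lemma il_mono':
  fixes x t y :: "'a::{order,finite}"
  assumes "x \<le> t" "t \<le> y" shows "interval_length x t \<le> interval_length x y"
  using il_step'[of x t y] assms by (cases "t = y") (auto simp: less_le)

lemma chain_least:
  fixes C :: "'a::order set"
  assumes "finite C" "C \<noteq> {}" "\<forall>a\<in>C. \<forall>b\<in>C. a \<le> b \<or> b \<le> a"
  shows "\<exists>a\<in>C. \<forall>c\<in>C. a \<le> c"
  using assms
proof (induction C rule: finite_ne_induct)
  case (singleton x) then show ?case by auto
next
  case (insert x F)
  then obtain a where a: "a \<in> F" "\<forall>c\<in>F. a \<le> c" by auto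
  show ?case
  proof (cases "x \<le> a")
    case True then show ?thesis using a by (auto intro: order_trans)
  next
    case False then have "a \<le> x" using insert.prems a by auto
    then show ?thesis using a by auto
  qed
qed

lemma il_split:
  fixes x y :: "'a::{order,finite}"
  assumes "Suc m \<le> interval_length x y"
  shows "\<exists>t. x < t \<and> t \<le> y \<and> m \<le> interval_length t y"
proof -
  obtain C where C: "C \<subseteq> {z. x \<le> z \<and> z \<le> y}" "\<forall>a\<in>C. \<forall>b\<in>C. a \<le> b \<or> b \<le> a"
    "card C - 1 = interval_length x y" by (rule il_obtain)
  have fin: "finite C" by simp
  have cC: "card C \<ge> 2" using C(3) assms by linarith
  then have "C \<noteq> {}" by auto
  then obtain a where a: "a \<in> C" "\<forall>c\<in>C. a \<le> c" using chain_least[OF fin _ C(2)] by blast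
  let ?D = "C - {a}"
  have cD: "card ?D = card C - 1" using a(1) by simp
  have "card ?D \<ge> 1" using cD cC by linarith
  then have "?D \<noteq> {}" by (metis card.empty not_one_le_zero)
  then obtain t where t: "t \<in> ?D" "\<forall>c\<in>?D. t \<le> c" using chain_least[of ?D] C(2) by auto
  have "card ?D - 1 \<le> interval_length t y"
    apply (rule il_ge) using t C by auto
  moreover have "x < t"
  proof -
    have "t \<in> C" "t \<noteq> a" using t(1) by auto
    then have "a < t" using a(2) by (simp add: order.not_eq_order_implies_strict)
    moreover have "x \<le> a" using a(1) C(1) by auto
    ultimately show ?thesis by (rule le_less_trans[rotated])
  qed
  moreover have "t \<le> y" using t C by auto
  ultimately show ?thesis using cD C(3) assms by (intro exI[of _ t]) auto
qed

lemma il_bound: "interval_length (x::'a::{order,finite}) y < card (UNIV::'a set)"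
proof -
  obtain C :: "'a set" where C0: "C \<subseteq> {z. x \<le> z \<and> z \<le> y}" "\<forall>a\<in>C. \<forall>b\<in>C. a \<le> b \<or> b \<le> a" and C: "card C - 1 = interval_length x y" by (rule il_obtain)
  have "card C \<le> card (UNIV::'a set)" by (rule card_mono) auto
  moreover have "card (UNIV::'a set) \<ge> 1" by (simp add: Suc_leI finite_UNIV_card_ge_0)
  ultimately show ?thesis using C by linarith
qed


lemma kspan_mono: "S \<subseteq> T \<Longrightarrow> kspan S \<subseteq> kspan T"
  unfolding kspan_def by blast

lemma kspan_sub:
  fixes T :: "('a \<Rightarrow> 'a \<Rightarrow> 'k::field) set"
  assumes "S \<subseteq> T" "0 \<in> T" "\<forall>f\<in>T. \<forall>g\<in>T. f + g \<in> T" "\<forall>c f. f \<in> T \<longrightarrow> (\<lambda>u v. c * f u v) \<in> T"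
  shows "kspan S \<subseteq> T"
proof
  fix f assume "f \<in> kspan S"
  then obtain A c where A: "finite A" "A \<subseteq> S" "f = (\<lambda>u v. \<Sum>s\<in>A. c s * s u v)"
    unfolding kspan_def by blast
  have "A \<subseteq> S \<longrightarrow> (\<lambda>u v. \<Sum>s\<in>A. c s * s u v) \<in> T" using A(1)
  proof (induction A rule: finite_induct)
    case empty
    have "(\<lambda>u v. \<Sum>s\<in>{}. c s * s u v) = (0 :: 'a \<Rightarrow> 'a \<Rightarrow> 'k)" by (auto simp: fun_eq_iff)
    then show ?case using assms by simp
  next
    case (insert x F)
    have "(\<lambda>u v. \<Sum>s\<in>insert x F. c s * s u v) = (\<lambda>u v. c x * x u v) + (\<lambda>u v. \<Sum>s\<in>F. c s * s u v)"
      using insert by (auto simp: fun_eq_iff)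
    then show ?case using insert assms by auto
  qed
  then show "f \<in> T" using A by simp
qed

lemma Pm_0: "(0::'a::{order,finite} \<Rightarrow> 'a \<Rightarrow> 'k::field) \<in> Pm m" by (simp add: Pm_def)
lemma Pm_add: "f \<in> Pm m \<Longrightarrow> g \<in> Pm m \<Longrightarrow> f + g \<in> Pm m"
  by (auto simp: Pm_def) (metis add.right_neutral)+
lemma Pm_diff: "f \<in> Pm m \<Longrightarrow> g \<in> Pm m \<Longrightarrow> f - g \<in> Pm m"
  by (auto simp: Pm_def) (metis diff_self diff_zero)+
lemma Pm_smult: "f \<in> Pm m \<Longrightarrow> (\<lambda>u v. c * f u v) \<in> Pm m"
  by (auto simp: Pm_def)

lemma kspan_Pm: "S \<subseteq> Pm m \<Longrightarrow> kspan S \<subseteq> Pm m"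
  by (rule kspan_sub) (auto intro: Pm_0 Pm_add Pm_smult)

lemma Pm_alg: "Pm m \<subseteq> inc_alg"
  by (auto simp: Pm_def inc_alg_def)


lemma Pm_0_alg: "Pm 0 = inc_alg"
  by (auto simp: Pm_def inc_alg_def)

lemma sum_nz: "sum h S \<noteq> 0 \<Longrightarrow> \<exists>t\<in>S. h t \<noteq> 0"
  by (meson sum.neutral)

lemma mult_Pm:
  fixes f g :: "'a::{order,finite} \<Rightarrow> 'a \<Rightarrow> 'k::field"
  assumes "f \<in> Pm a" "g \<in> Pm b" "\<And>x t y::'a. x \<le> t \<Longrightarrow> t \<le> y \<Longrightarrow> a \<le> interval_length x t \<Longrightarrow> b \<le> interval_length t y \<Longrightarrow> c \<le> interval_length x y"
  shows "inc_mult f g \<in> Pm c"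
  unfolding Pm_def
proof (intro CollectI allI impI)
  fix x y assume "inc_mult f g x y \<noteq> 0"
  then obtain t where t: "x \<le> t" "t \<le> y" "f x t * g t y \<noteq> 0"
    unfolding inc_mult_def by (auto dest: sum_nz)
  then have "f x t \<noteq> 0" "g t y \<noteq> 0" by auto
  then have "a \<le> interval_length x t" "b \<le> interval_length t y"
    using assms(1,2) unfolding Pm_def by blast+
  then have "c \<le> interval_length x y" by (rule assms(3)[OF t(1,2)])
  moreover have "x \<le> y" using t(1,2) by (rule order_trans)
  ultimately show "x \<le> y \<and> c \<le> interval_length x y" by simp
qed

lemma mult_P1_left: "f \<in> Pm 1 \<Longrightarrow> g \<in> Pm m \<Longrightarrow> inc_mult f g \<in> Pm (Suc m)"
  apply (rule mult_Pm, assumption, assumption)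
  using il_step il_ge1 by (metis Suc_le_mono order_trans)

lemma mult_P1_right: "f \<in> Pm 1 \<Longrightarrow> g \<in> Pm m \<Longrightarrow> inc_mult g f \<in> Pm (Suc m)"
  apply (rule mult_Pm, assumption, assumption)
  using il_step' il_ge1 by (metis Suc_le_mono order_trans)

lemma mult_alg_left: "f \<in> inc_alg \<Longrightarrow> g \<in> Pm m \<Longrightarrow> inc_mult f g \<in> Pm m"
  apply (rule mult_Pm[where a=0], simp add: Pm_0_alg, assumption)
  using il_mono order_trans by blast

lemma mult_alg_right: "f \<in> inc_alg \<Longrightarrow> g \<in> Pm m \<Longrightarrow> inc_mult g f \<in> Pm m"
  apply (rule mult_Pm[where b=0], assumption, simp add: Pm_0_alg)
  using il_mono' order_trans by blast

lemma mult_eunit: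
  "inc_mult (eunit a b) (eunit c d) = (if b = c \<and> a \<le> b \<and> b \<le> d then eunit a d else (0::'a::{order,finite} \<Rightarrow> 'a \<Rightarrow> 'k::field))"
proof (rule ext, rule ext)
  fix u v :: 'a
  have "inc_mult (eunit a b) (eunit c d) u v
     = (\<Sum>t\<in>{t. u \<le> t \<and> t \<le> v}. (if t = b then (if u = a \<and> b = c \<and> v = d then 1 else 0) else (0::'k)))"
    unfolding inc_mult_def eunit_def by (rule sum.cong) auto
  also have "\<dots> = (if b \<in> {t. u \<le> t \<and> t \<le> v} then (if u = a \<and> b = c \<and> v = d then 1 else 0) else 0)"
    by (rule sum.delta) simp
  also have "\<dots> = (if b = c \<and> a \<le> b \<and> b \<le> d then eunit a d else (0::'a\<Rightarrow>'a\<Rightarrow>'k)) u v"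
    by (auto simp: eunit_def)
  finally show "inc_mult (eunit a b) (eunit c d) u v = (if b = c \<and> a \<le> b \<and> b \<le> d then eunit a d else (0::'a\<Rightarrow>'a\<Rightarrow>'k)) u v" .
qed

lemma eunit_Pm: "x \<le> y \<Longrightarrow> m \<le> interval_length x y \<Longrightarrow> eunit x y \<in> Pm m"
  by (auto simp: Pm_def eunit_def split: if_splits)

lemma comm_eunit: "x < t \<Longrightarrow> t \<le> y \<Longrightarrow> inc_comm (eunit x t) (eunit t y) = (eunit x y :: 'a::{order,finite} \<Rightarrow> 'a \<Rightarrow> 'k::field)"
  unfolding inc_comm_def mult_eunit by auto

lemma eunit_inj: "eunit a b = (eunit c d :: 'a \<Rightarrow> 'a \<Rightarrow> 'k::field) \<Longrightarrow> a = c \<and> b = d"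
  unfolding eunit_def by (metis one_neq_zero)

lemma Pm_kspan: "(Pm m :: ('a::{order,finite} \<Rightarrow> 'a \<Rightarrow> 'k::field) set) = kspan {eunit x y | x y. x \<le> y \<and> m \<le> interval_length x y}"
proof
  show "kspan {(eunit x y :: 'a \<Rightarrow> 'a \<Rightarrow> 'k) | x y. x \<le> y \<and> m \<le> interval_length x y} \<subseteq> Pm m"
    by (rule kspan_Pm) (auto intro: eunit_Pm)
next
  show "Pm m \<subseteq> kspan {(eunit x y :: 'a \<Rightarrow> 'a \<Rightarrow> 'k) | x y. x \<le> y \<and> m \<le> interval_length x y}"
  proof
    fix f :: "'a \<Rightarrow> 'a \<Rightarrow> 'k" assume f: "f \<in> Pm m"
    define D where "D = {(x::'a, y). x \<le> y \<and> m \<le> interval_length x y}"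
    define g where "g = (\<lambda>p::'a\<times>'a. eunit (fst p) (snd p) :: 'a \<Rightarrow> 'a \<Rightarrow> 'k)"
    define c where "c = (\<lambda>s. f (fst (inv_into D g s)) (snd (inv_into D g s)))"
    have inj: "inj_on g D" unfolding inj_on_def g_def using eunit_inj by (metis prod.expand)
    have "f = (\<lambda>u v. \<Sum>s\<in>g ` D. c s * s u v)"
    proof (rule ext, rule ext)
      fix u v
      have "(\<Sum>s\<in>g ` D. c s * s u v) = (\<Sum>p\<in>D. c (g p) * g p u v)"
        by (rule sum.reindex[OF inj, unfolded comp_def])
      also have "\<dots> = (\<Sum>p\<in>D. if p = (u, v) then f u v else 0)"
        apply (rule sum.cong, simp)
        using inv_into_f_f[OF inj] by (auto simp: c_def g_def eunit_def)
      also have "\<dots> = (if (u, v) \<in> D then f u v else 0)"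
        by (rule sum.delta) simp
      also have "\<dots> = f u v" using f by (auto simp: D_def Pm_def)
      finally show "f u v = (\<Sum>s\<in>g ` D. c s * s u v)" by simp
    qed
    moreover have "g ` D \<subseteq> {(eunit x y :: 'a \<Rightarrow> 'a \<Rightarrow> 'k) | x y. x \<le> y \<and> m \<le> interval_length x y}"
    proof
      fix s assume "s \<in> g ` D"
      then obtain x y where xy: "(x, y) \<in> D" "s = g (x, y)" by auto
      have "s = eunit x y \<and> x \<le> y \<and> m \<le> interval_length x y" using xy by (simp add: g_def D_def)
      then show "s \<in> {(eunit x y :: 'a \<Rightarrow> 'a \<Rightarrow> 'k) | x y. x \<le> y \<and> m \<le> interval_length x y}" by blast
    qed
    moreover have "finite (g ` D)" by simp
    ultimately show "f \<in> kspan {(eunit x y :: 'a \<Rightarrow> 'a \<Rightarrow> 'k) | x y. x \<le> y \<and> m \<le> interval_length x y}"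
      unfolding kspan_def by (intro CollectI exI[of _ "g ` D"] exI[of _ c]) simp
  qed
qed


lemma comm_expand: "inc_comm f g x y = (\<Sum>t\<in>{t. x \<le> t \<and> t \<le> y}. f x t * g t y) - (\<Sum>t\<in>{t. x \<le> t \<and> t \<le> y}. g x t * f t y)"
  by (simp add: inc_comm_def inc_mult_def)

lemma comm_in_P1: "inc_comm f g \<in> Pm 1"
  unfolding Pm_def
proof (intro CollectI allI impI)
  fix x y assume nz: "inc_comm f g x y \<noteq> 0"
  have xy: "x \<le> y"
  proof (rule ccontr)
    assume "\<not> x \<le> y"
    then have E: "{t. x \<le> t \<and> t \<le> y} = {}" using order_trans by blast
    have "inc_comm f g x y = 0" unfolding comm_expand E by simp
    then show False using nz by simp
  qed
  have "x \<noteq> y"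
  proof
    assume "x = y"
    then have E: "{t. x \<le> t \<and> t \<le> y} = {x}" by auto
    have "inc_comm f g x y = 0" unfolding comm_expand E using \<open>x = y\<close> by (simp add: mult.commute)
    then show False using nz by simp
  qed
  then show "x \<le> y \<and> 1 \<le> interval_length x y" using xy il_pos by (auto simp: less_le)
qed

lemma comm_in_P1': "inc_comm f g \<in> Pm (Suc 0)"
  using comm_in_P1 by simp

lemma comm_Pm: "f \<in> Pm 1 \<Longrightarrow> g \<in> Pm m \<Longrightarrow> inc_comm f g \<in> Pm (Suc m)"
  unfolding inc_comm_def by (intro Pm_diff mult_P1_left mult_P1_right)

lemma eunit_alg: "x \<le> y \<Longrightarrow> eunit x y \<in> inc_alg"
  by (auto simp: inc_alg_def eunit_def)

lemma Jlie_1: "(Jlie (Suc 0) :: ('a::{order,finite} \<Rightarrow> 'a \<Rightarrow> 'k::field) set) = Pm 1"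
proof
  show "(Jlie (Suc 0) :: ('a \<Rightarrow> 'a \<Rightarrow> 'k) set) \<subseteq> Pm 1" by (auto intro!: kspan_Pm comm_in_P1')
next
  have "{(eunit x y :: 'a \<Rightarrow> 'a \<Rightarrow> 'k) | x y. x \<le> y \<and> 1 \<le> interval_length x y} \<subseteq> {inc_comm f g | f g. f \<in> inc_alg \<and> g \<in> inc_alg}"
  proof clarify
    fix x y :: 'a assume "x \<le> y" "1 \<le> interval_length x y"
    then have "x < y" using il_ge1 by blast
    then have "(eunit x y :: 'a \<Rightarrow> 'a \<Rightarrow> 'k) = inc_comm (eunit x x) (eunit x y)"
      unfolding inc_comm_def mult_eunit by auto
    then show "\<exists>f g. (eunit x y :: 'a \<Rightarrow> 'a \<Rightarrow> 'k) = inc_comm f g \<and> f \<in> inc_alg \<and> g \<in> inc_alg"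
      using eunit_alg \<open>x \<le> y\<close> by blast
  qed
  then show "(Pm 1 :: ('a \<Rightarrow> 'a \<Rightarrow> 'k) set) \<subseteq> Jlie (Suc 0)" unfolding Pm_kspan Jlie.simps by (rule kspan_mono)
qed

lemma Jlie_Suc: "(Jlie (Suc m) :: ('a::{order,finite} \<Rightarrow> 'a \<Rightarrow> 'k::field) set) = Pm (Suc m)"
proof (induction m)
  case 0 then show ?case using Jlie_1 by simp
next
  case (Suc m)
  show ?case
  proof
    show "(Jlie (Suc (Suc m)) :: ('a \<Rightarrow> 'a \<Rightarrow> 'k) set) \<subseteq> Pm (Suc (Suc m))"
      using Suc Jlie_1 by (auto intro!: kspan_Pm comm_Pm)
  next
    have "{(eunit x y :: 'a \<Rightarrow> 'a \<Rightarrow> 'k) | x y. x \<le> y \<and> Suc (Suc m) \<le> interval_length x y}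
       \<subseteq> {inc_comm f g | f g. f \<in> Jlie (Suc 0) \<and> g \<in> Jlie (Suc m)}"
    proof clarify
      fix x y :: 'a assume "x \<le> y" "Suc (Suc m) \<le> interval_length x y"
      then obtain t where t: "x < t" "t \<le> y" "Suc m \<le> interval_length t y" using il_split by blast
      have "(eunit x y :: 'a \<Rightarrow> 'a \<Rightarrow> 'k) = inc_comm (eunit x t) (eunit t y)" using comm_eunit t by metis
      moreover have "(eunit x t :: 'a \<Rightarrow> 'a \<Rightarrow> 'k) \<in> Pm 1"
        by (rule eunit_Pm) (use t il_pos in \<open>auto simp: less_imp_le\<close>)
      then have "(eunit x t :: 'a \<Rightarrow> 'a \<Rightarrow> 'k) \<in> Jlie (Suc 0)" by (simp only: Jlie_1)
      moreover have "(eunit t y :: 'a \<Rightarrow> 'a \<Rightarrow> 'k) \<in> Jlie (Suc m)" using Suc eunit_Pm t by simp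
      ultimately show "\<exists>f g. (eunit x y :: 'a \<Rightarrow> 'a \<Rightarrow> 'k) = inc_comm f g \<and> f \<in> Jlie (Suc 0) \<and> g \<in> Jlie (Suc m)" by blast
    qed
    then show "(Pm (Suc (Suc m)) :: ('a \<Rightarrow> 'a \<Rightarrow> 'k) set) \<subseteq> Jlie (Suc (Suc m))" unfolding Pm_kspan Jlie.simps by (rule kspan_mono)
  qed
qed

lemma rad_P1: "(inc_rad :: ('a::{order,finite} \<Rightarrow> 'a \<Rightarrow> 'k::field) set) = Pm 1"
proof
  show "(inc_rad :: ('a \<Rightarrow> 'a \<Rightarrow> 'k) set) \<subseteq> Pm 1"
  proof
    fix f :: "'a \<Rightarrow> 'a \<Rightarrow> 'k" assume f: "f \<in> inc_rad"
    show "f \<in> Pm 1" unfolding Pm_def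
    proof (intro CollectI allI impI)
      fix x y assume "f x y \<noteq> 0"
      then have "x \<le> y" "x \<noteq> y" using f by (auto simp: inc_rad_def inc_alg_def)
      then show "x \<le> y \<and> 1 \<le> interval_length x y" using il_pos by (auto simp: less_le)
    qed
  qed
next
  show "(Pm 1 :: ('a \<Rightarrow> 'a \<Rightarrow> 'k) set) \<subseteq> inc_rad"
  proof
    fix f :: "'a \<Rightarrow> 'a \<Rightarrow> 'k" assume f: "f \<in> Pm 1"
    have A: "\<forall>x y. \<not> x \<le> y \<longrightarrow> f x y = 0" using f by (auto simp: Pm_def)
    have B: "f x x = 0" for x
    proof (rule ccontr)
      assume "f x x \<noteq> 0"
      then have "1 \<le> interval_length x x" using f unfolding Pm_def by blast
      then show False using il_refl[of x] by simp
    qed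
    show "f \<in> inc_rad" using A B by (simp add: inc_rad_def inc_alg_def)
  qed
qed

lemma rad_prods_Suc: "(rad_prods (Suc m) :: ('a::{order,finite} \<Rightarrow> 'a \<Rightarrow> 'k::field) set) \<subseteq> Pm (Suc m) \<and>
   {(eunit x y :: 'a \<Rightarrow> 'a \<Rightarrow> 'k) | x y. x \<le> y \<and> Suc m \<le> interval_length x y} \<subseteq> rad_prods (Suc m)"
proof (induction m)
  case 0 then show ?case using rad_P1 eunit_Pm by auto
next
  case (Suc m)
  have "(rad_prods (Suc (Suc m)) :: ('a \<Rightarrow> 'a \<Rightarrow> 'k) set) \<subseteq> Pm (Suc (Suc m))"
    using Suc rad_P1 by (auto intro!: mult_P1_left)
  moreover have "{(eunit x y :: 'a \<Rightarrow> 'a \<Rightarrow> 'k) | x y. x \<le> y \<and> Suc (Suc m) \<le> interval_length x y} \<subseteq> rad_prods (Suc (Suc m))"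
  proof clarify
    fix x y :: 'a assume "x \<le> y" "Suc (Suc m) \<le> interval_length x y"
    then obtain t where t: "x < t" "t \<le> y" "Suc m \<le> interval_length t y" using il_split by blast
    have "(eunit x y :: 'a \<Rightarrow> 'a \<Rightarrow> 'k) = inc_mult (eunit x t) (eunit t y)" using t by (simp add: mult_eunit less_imp_le)
    moreover have "(eunit x t :: 'a \<Rightarrow> 'a \<Rightarrow> 'k) \<in> Pm 1"
      by (rule eunit_Pm) (use t il_pos in \<open>auto simp: less_imp_le\<close>)
    then have "(eunit x t :: 'a \<Rightarrow> 'a \<Rightarrow> 'k) \<in> inc_rad" by (simp only: rad_P1)
    moreover have "(eunit t y :: 'a \<Rightarrow> 'a \<Rightarrow> 'k) \<in> rad_prods (Suc m)" using Suc t by blast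
    ultimately show "(eunit x y :: 'a \<Rightarrow> 'a \<Rightarrow> 'k) \<in> rad_prods (Suc (Suc m))" by auto
  qed
  ultimately show ?case by blast
qed

lemma rad_pow_Suc: "(rad_pow (Suc m) :: ('a::{order,finite} \<Rightarrow> 'a \<Rightarrow> 'k::field) set) = Pm (Suc m)"
proof
  show "(rad_pow (Suc m) :: ('a \<Rightarrow> 'a \<Rightarrow> 'k) set) \<subseteq> Pm (Suc m)" unfolding rad_pow_def by (rule kspan_Pm) (rule conjunct1[OF rad_prods_Suc])
  show "(Pm (Suc m) :: ('a \<Rightarrow> 'a \<Rightarrow> 'k) set) \<subseteq> rad_pow (Suc m)" unfolding rad_pow_def Pm_kspan by (rule kspan_mono) (rule conjunct2[OF rad_prods_Suc])
qed

lemma Pm_card: "Pm (card (UNIV::'a::{order,finite} set)) = {0::'a \<Rightarrow> 'a \<Rightarrow> 'k::field}"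
proof -
  have "f = 0" if "f \<in> Pm (card (UNIV::'a set))" for f :: "'a \<Rightarrow> 'a \<Rightarrow> 'k"
  proof (rule ext, rule ext)
    fix x y :: 'a
    show "f x y = 0 x y"
    proof (rule ccontr)
      assume "f x y \<noteq> 0 x y"
      then have "f x y \<noteq> 0" by simp
      then have "card (UNIV::'a set) \<le> interval_length x y" using that unfolding Pm_def by blast
      then show False using il_bound[of x y] by simp
    qed
  qed
  then show ?thesis using Pm_0 by blast
qed

theorem proposition2p4:
  fixes m n :: nat
  assumes conn: "poset_connected TYPE('a::{finite,order})"
    and n_def: "n = card (UNIV :: 'a set)"
    and m_pos: "m \<ge> 1"
  shows "(Jlie m :: ('a \<Rightarrow> 'a \<Rightarrow> 'k::field) set)
           = kspan {(eunit x y :: 'a \<Rightarrow> 'a \<Rightarrow> 'k) | x y. x \<le> y \<and> interval_length x y \<ge> m}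
       \<and> (Jlie m :: ('a \<Rightarrow> 'a \<Rightarrow> 'k) set) = rad_pow m
       \<and> (Jlie n :: ('a \<Rightarrow> 'a \<Rightarrow> 'k) set) = {0}
       \<and> (rad_pow n :: ('a \<Rightarrow> 'a \<Rightarrow> 'k) set) = {0}
       \<and> (Jlie m :: ('a \<Rightarrow> 'a \<Rightarrow> 'k) set) \<subseteq> inc_alg
       \<and> 0 \<in> (Jlie m :: ('a \<Rightarrow> 'a \<Rightarrow> 'k) set)
       \<and> (\<forall>f\<in>Jlie m. \<forall>g\<in>Jlie m. f + g \<in> (Jlie m :: ('a \<Rightarrow> 'a \<Rightarrow> 'k) set))
       \<and> (\<forall>c::'k. \<forall>f\<in>Jlie m. (\<lambda>u v. c * f u v) \<in> (Jlie m :: ('a \<Rightarrow> 'a \<Rightarrow> 'k) set))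
       \<and> (\<forall>f\<in>inc_alg. \<forall>g\<in>Jlie m. inc_mult f g \<in> (Jlie m :: ('a \<Rightarrow> 'a \<Rightarrow> 'k) set)
                                \<and> inc_mult g f \<in> Jlie m)
       \<and> (\<forall>f\<in>inc_alg. \<forall>g\<in>Jlie m. inc_comm f g \<in> (Jlie m :: ('a \<Rightarrow> 'a \<Rightarrow> 'k) set))"
proof -
  obtain k where k: "m = Suc k" using m_pos by (cases m) auto
  have npos: "n \<ge> 1" using n_def by (simp add: Suc_leI finite_UNIV_card_ge_0)
  obtain j where j: "n = Suc j" using npos by (cases n) auto
  have J: "(Jlie m :: ('a \<Rightarrow> 'a \<Rightarrow> 'k) set) = Pm m" using k Jlie_Suc by simp
  have R: "(rad_pow m :: ('a \<Rightarrow> 'a \<Rightarrow> 'k) set) = Pm m" using k rad_pow_Suc by simp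
  have Jn: "(Jlie n :: ('a \<Rightarrow> 'a \<Rightarrow> 'k) set) = {0}" using j Jlie_Suc Pm_card n_def by metis
  have Rn: "(rad_pow n :: ('a \<Rightarrow> 'a \<Rightarrow> 'k) set) = {0}" using j rad_pow_Suc Pm_card n_def by metis
  have comm: "inc_comm f g \<in> Pm m" if "f \<in> inc_alg" "g \<in> Pm m" for f g :: "'a \<Rightarrow> 'a \<Rightarrow> 'k"
    unfolding inc_comm_def using that by (intro Pm_diff mult_alg_left mult_alg_right)
  show ?thesis unfolding J R
    apply (intro conjI ballI allI)
             apply (rule Pm_kspan)
            apply (rule refl)
           apply (rule Jn)
          apply (rule Rn)
         apply (rule Pm_alg)
        apply (rule Pm_0)
       apply (erule (1) Pm_add)
      apply (erule Pm_smult)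
     apply (erule (1) mult_alg_left)
    apply (erule (1) mult_alg_right)
   apply (erule (1) comm)
  done
qed

end
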